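(* Let $\alpha>1/3$, $\beta>0$ and $\varepsilon>0$. There exist almost surely finite random times $N_1,N_2$ (depending on $\varepsilon$) such that: (i) for all $j\in\mathbb{Z}$ and all $k\ge N_1$: if $X_k=j$ and $\Delta_k(j)/k\ge\varepsilon$ then $X_{k+1}=j+1$; if $X_k=j$ and $\Delta_k(j)/k\le-\varepsilon$ then $X_{k+1}=j-1$; (ii) for all $k\ge N_2$ and all $j\in\mathbb{Z}$: if $X_k<j$ then $\Delta_k(j)/k<3\varepsilon/2$, and if $X_k>j$ then $\Delta_k(j)/k>-3\varepsilon/2$.
   Context: Let $\alpha\in\mathbb{R}$ and $\beta>0$. Let $(X_k)_{k\ge0}$ be the nearest-neighbour random walk on $\mathbb{Z}$ with $X_0=0$ defined as follows. For $k\ge0$ and $j\in\mathbb{Z}$, let $l_k(j):=\#\{m\in\{1,\dots,k\}:\{X_{m-1},X_m\}=\{j-1,j\}\}$, let $\mathcal{F}_k=\sigma(X_0,\dots,X_k)$, and let $\Delta_k(j):=-\alpha l_k(j-1)+l_k(j)-l_k(j+1)+\alpha l_k(j+2)$. The transition probabilities are $\mathbb{P}(X_{k+1}=X_k\pm1\mid\mathcal{F}_k)=\dfrac{e^{\pm\beta\Delta_k(X_k)}}{e^{\beta\Delta_k(X_k)}+e^{-\beta\Delta_k(X_k)}}$. *)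

theory Defs
  imports "HOL-Probability.Probability"
begin

text \<open>Paths are functions p :: nat => int (p m = X_m).
  Local time of the edge {j-1, j} up to time k.\<close>
definition loc_time :: "(nat \<Rightarrow> int) \<Rightarrow> nat \<Rightarrow> int \<Rightarrow> nat" where
  "loc_time p k j = card {m \<in> {1..k}. {p (m - 1), p m} = {j - 1, j}}"

definition Delta :: "real \<Rightarrow> (nat \<Rightarrow> int) \<Rightarrow> nat \<Rightarrow> int \<Rightarrow> real" where
  "Delta \<alpha> p k j = - \<alpha> * real (loc_time p k (j - 1)) + real (loc_time p k j)
     - real (loc_time p k (j + 1)) + \<alpha> * real (loc_time p k (j + 2))"

definition step_prob :: "real \<Rightarrow> real \<Rightarrow> (nat \<Rightarrow> int) \<Rightarrow> nat \<Rightarrow> real" where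
  "step_prob \<alpha> \<beta> p k =
     (let d = Delta \<alpha> p k (p k) in
      if p (Suc k) = p k + 1 then exp (\<beta> * d) / (exp (\<beta> * d) + exp (- \<beta> * d))
      else if p (Suc k) = p k - 1 then exp (- \<beta> * d) / (exp (\<beta> * d) + exp (- \<beta> * d))
      else 0)"

definition path_prob :: "real \<Rightarrow> real \<Rightarrow> (nat \<Rightarrow> int) \<Rightarrow> nat \<Rightarrow> real" where
  "path_prob \<alpha> \<beta> p n = (if p 0 = 0 then (\<Prod>k<n. step_prob \<alpha> \<beta> p k) else 0)"

text \<open>X is the walk on the probability space M: its finite-dimensional laws are those
  determined by the transition probabilities (this characterises the law of the process).\<close>
definition is_walk :: "'w measure \<Rightarrow> real \<Rightarrow> real \<Rightarrow> (nat \<Rightarrow> 'w \<Rightarrow> int) \<Rightarrow> bool" where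
  "is_walk M \<alpha> \<beta> X \<longleftrightarrow> prob_space M \<and>
     (\<forall>i. X i \<in> measurable M (count_space UNIV)) \<and>
     (\<forall>p n. measure M {\<omega> \<in> space M. \<forall>i\<le>n. X i \<omega> = p i} = path_prob \<alpha> \<beta> p n)"

end

theory Submission
  imports Defs
begin


lemma loc_time_le: "loc_time p k j \<le> k"
proof -
  have "loc_time p k j \<le> card {1..k}" unfolding loc_time_def
    by (rule card_mono) auto
  thus ?thesis by simp
qed

lemma loc_time_0: "loc_time p 0 j = 0"
  unfolding loc_time_def by simp

lemma Delta_0: "Delta a p 0 j = 0"
  unfolding Delta_def by (simp add: loc_time_0)

lemma Delta_bound:
  assumes "a \<ge> 0"
  shows "\<bar>Delta a p k j\<bar> \<le> (2 + 2*a) * real k"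
proof -
  have h: "\<And>j. real (loc_time p k j) \<le> real k" using loc_time_le by simp
  have h0: "\<And>j. real (loc_time p k j) \<ge> 0" by simp
  have "a * real (loc_time p k (j - 1)) \<le> a * real k"
       "a * real (loc_time p k (j + 2)) \<le> a * real k"
    using h assms by (auto intro: mult_left_mono)
  moreover have "a * real (loc_time p k (j - 1)) \<ge> 0" "a * real (loc_time p k (j + 2)) \<ge> 0"
    using assms by auto
  ultimately show ?thesis unfolding Delta_def using h[of j] h[of "j+1"] h0[of j] h0[of "j+1"]
    by (simp add: algebra_simps abs_le_iff)
qed

lemma loc_time_cong:
  assumes "\<forall>i\<le>k. p i = q i"
  shows "loc_time p k j = loc_time q k j"
proof -
  have "{m \<in> {1..k}. {p (m - 1), p m} = {j - 1, j}} = {m \<in> {1..k}. {q (m - 1), q m} = {j - 1, j}}"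
    using assms by auto
  thus ?thesis unfolding loc_time_def by simp
qed

lemma Delta_cong:
  assumes "\<forall>i\<le>k. p i = q i"
  shows "Delta a p k j = Delta a q k j"
  unfolding Delta_def using loc_time_cong[OF assms] by simp

lemma set_Suc_split: "{m \<in> {1..Suc k}. P m} = (if P (Suc k) then insert (Suc k) else id) {m \<in> {1..k}. P m}"
  by (auto simp: le_Suc_eq)

lemma loc_time_Suc:
  "loc_time p (Suc k) j = loc_time p k j + (if {p k, p (Suc k)} = {j - 1, j} then 1 else 0)"
  unfolding loc_time_def set_Suc_split[where P = "\<lambda>m. {p (m - 1), p m} = {j - 1, j}"]
  by simp

lemma dbl1: "({x, x+1} = {j - 1, j::int}) = (j = x+1)"
  by (auto simp: doubleton_eq_iff)
lemma dbl2: "({x, x-1} = {j - 1, j::int}) = (j = x)"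
  by (auto simp: doubleton_eq_iff)

lemma ind: "(if b then 1 else 0::nat) = (if b then 1 else 0)" by simp

lemma loc_time_step:
  assumes "p (Suc k) = p k + 1 \<or> p (Suc k) = p k - 1"
  shows "real (loc_time p (Suc k) j) = real (loc_time p k j) + (if j = max (p k) (p (Suc k)) then 1 else 0)"
proof -
  have "({p k, p (Suc k)} = {j - 1, j}) = (j = max (p k) (p (Suc k)))"
  proof (cases "p (Suc k) = p k + 1")
    case True
    then show ?thesis using dbl1[of "p k" j] by (simp add: max_def)
  next
    case False
    hence "p (Suc k) = p k - 1" using assms by simp
    then show ?thesis using dbl2[of "p k" j] by (simp add: max_def)
  qed
  thus ?thesis by (simp add: loc_time_Suc)
qed

lemma Delta_step:
  assumes "p (Suc k) = p k + 1 \<or> p (Suc k) = p k - 1"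
  defines "e \<equiv> max (p k) (p (Suc k))"
  shows "Delta a p (Suc k) j = Delta a p k j - a * (if j - 1 = e then 1 else 0) + (if j = e then 1 else 0)
     - (if j + 1 = e then 1 else 0) + a * (if j + 2 = e then 1 else 0)"
  unfolding Delta_def loc_time_step[OF assms(1)] e_def by (simp add: algebra_simps)
lemma Delta_step_le:
  assumes "p (Suc k) = p k + 1 \<or> p (Suc k) = p k - 1" and a: "a \<ge> 0"
  shows "Delta a p (Suc k) j \<le> Delta a p k j + (if j = max (p k) (p (Suc k)) then 1 else 0)
           + a * (if j + 2 = max (p k) (p (Suc k)) then 1 else 0)"
    and "Delta a p (Suc k) j \<ge> Delta a p k j - (if j + 1 = max (p k) (p (Suc k)) then 1 else 0)
           - a * (if j - 1 = max (p k) (p (Suc k)) then 1 else 0)"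
proof -
  note ds = Delta_step[OF assms(1), of a j]
  have x: "a * (if P then 1 else 0) \<ge> 0" for P using a by simp
  show "Delta a p (Suc k) j \<le> Delta a p k j + (if j = max (p k) (p (Suc k)) then 1 else 0)
           + a * (if j + 2 = max (p k) (p (Suc k)) then 1 else 0)"
    using ds x[of "j - 1 = max (p k) (p (Suc k))"]
    by (cases "j + 1 = max (p k) (p (Suc k))"; simp)
  show "Delta a p (Suc k) j \<ge> Delta a p k j - (if j + 1 = max (p k) (p (Suc k)) then 1 else 0)
           - a * (if j - 1 = max (p k) (p (Suc k)) then 1 else 0)"
    using ds x[of "j + 2 = max (p k) (p (Suc k))"]
    by (cases "j = max (p k) (p (Suc k))"; simp)
qed


definition good_step :: "real \<Rightarrow> real \<Rightarrow> (nat \<Rightarrow> int) \<Rightarrow> nat \<Rightarrow> bool" where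
  "good_step a eps p n \<longleftrightarrow>
     (n > 0 \<and> Delta a p n (p n) \<ge> eps * n \<longrightarrow> p (Suc n) = p n + 1) \<and>
     (n > 0 \<and> Delta a p n (p n) \<le> - eps * n \<longrightarrow> p (Suc n) = p n - 1) \<and>
     (p (Suc n) = p n + 1 \<or> p (Suc n) = p n - 1)"

lemma det_bound:
  assumes a: "a > 0" and eps: "eps > 0" and N0: "N0 > 0"
    and good: "\<forall>n\<ge>N0. good_step a eps p n"
  shows "(\<forall>j. p k < j \<longrightarrow> Delta a p k j \<le> eps * k + 1 + (2 + 2*a) * N0) \<and>
         (\<forall>j. j < p k \<longrightarrow> Delta a p k j \<ge> - (eps * k + 1 + (2 + 2*a) * N0))"
proof (induction k)
  case 0
  have c: "0 \<le> eps * real 0 + 1 + (2+2*a)*real N0"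
    using a eps by (intro add_nonneg_nonneg mult_nonneg_nonneg) auto
  show ?case using c by (metis Delta_0 neg_le_0_iff_le)
next
  case (Suc k)
  show ?case
  proof (cases "Suc k \<le> N0")
    case True
    have "(2 + 2*a) * real (Suc k) \<le> (2 + 2*a) * N0"
      using True a by (intro mult_left_mono) auto
    moreover have "\<And>j. \<bar>Delta a p (Suc k) j\<bar> \<le> (2 + 2*a) * real (Suc k)"
      using Delta_bound[of a p "Suc k"] a by simp
    ultimately have b: "\<And>j. \<bar>Delta a p (Suc k) j\<bar> \<le> (2 + 2*a) * real N0" by (meson order_trans)
    have e0: "eps * real (Suc k) \<ge> 0" using eps by simp
    show ?thesis
    proof (intro conjI allI impI)
      fix j
      show "Delta a p (Suc k) j \<le> eps * real (Suc k) + 1 + (2 + 2 * a) * real N0"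
        using abs_le_D1[OF b[of j]] e0 by linarith
      show "- (eps * real (Suc k) + 1 + (2 + 2 * a) * real N0) \<le> Delta a p (Suc k) j"
        using abs_le_D2[OF b[of j]] e0 by linarith
    qed
  next
    case False
    hence kN: "k \<ge> N0" by simp
    hence kp: "k > 0" using N0 by simp
    have g: "good_step a eps p k" using good kN by simp
    hence nn: "p (Suc k) = p k + 1 \<or> p (Suc k) = p k - 1" unfolding good_step_def by blast
    have e1: "eps * real k \<le> eps * real (Suc k)" using eps by simp
    have c0: "(2+2*a)*real N0 \<ge> 0" using a by simp
    show ?thesis
    proof (intro conjI allI impI)
      fix j assume j: "p (Suc k) < j"
      have st: "Delta a p (Suc k) j \<le> Delta a p k j + (if j = max (p k) (p (Suc k)) then 1 else 0)
           + a * (if j + 2 = max (p k) (p (Suc k)) then 1 else 0)"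
        using Delta_step_le(1)[OF nn, of a j] a by simp
      show "Delta a p (Suc k) j \<le> eps * real (Suc k) + 1 + (2 + 2 * a) * real N0"
      proof (cases "p (Suc k) = p k + 1")
        case True
        hence "p k < j" using j by simp
        hence ih: "Delta a p k j \<le> eps * k + 1 + (2 + 2*a) * N0" using Suc.IH by blast
        have "max (p k) (p (Suc k)) = p k + 1" using True by simp
        hence "Delta a p (Suc k) j \<le> Delta a p k j" using st j True by simp
        then show ?thesis using ih e1 by linarith
      next
        case False
        hence dn: "p (Suc k) = p k - 1" using nn by simp
        have mx: "max (p k) (p (Suc k)) = p k" using dn by simp
        show ?thesis
        proof (cases "j = p k")
          case True
          have "\<not> (k > 0 \<and> Delta a p k (p k) \<ge> eps * k)" using g dn unfolding good_step_def by force
          hence d: "Delta a p k j < eps * k" using kp True by simp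
          have "Delta a p (Suc k) j \<le> Delta a p k j + 1" using st mx True by simp
          then show ?thesis using d e1 c0 by linarith
        next
          case False
          hence "p k < j" using j dn by simp
          hence ih: "Delta a p k j \<le> eps * k + 1 + (2 + 2*a) * N0" using Suc.IH by blast
          have "Delta a p (Suc k) j \<le> Delta a p k j" using st mx False \<open>p k < j\<close> by simp
          then show ?thesis using ih e1 by linarith
        qed
      qed
    next
      fix j assume j: "j < p (Suc k)"
      have st: "Delta a p (Suc k) j \<ge> Delta a p k j - (if j + 1 = max (p k) (p (Suc k)) then 1 else 0)
           - a * (if j - 1 = max (p k) (p (Suc k)) then 1 else 0)"
        using Delta_step_le(2)[OF nn, of a j] a by simp
      show "Delta a p (Suc k) j \<ge> - (eps * real (Suc k) + 1 + (2 + 2 * a) * real N0)"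
      proof (cases "p (Suc k) = p k - 1")
        case True
        hence "j < p k" using j by simp
        hence ih: "Delta a p k j \<ge> - (eps * k + 1 + (2 + 2*a) * N0)" using Suc.IH by blast
        have "max (p k) (p (Suc k)) = p k" using True by simp
        hence "Delta a p (Suc k) j \<ge> Delta a p k j" using st j True by simp
        then show ?thesis using ih e1 by linarith
      next
        case False
        hence up: "p (Suc k) = p k + 1" using nn by simp
        have mx: "max (p k) (p (Suc k)) = p k + 1" using up by simp
        show ?thesis
        proof (cases "j = p k")
          case True
          have "\<not> (k > 0 \<and> Delta a p k (p k) \<le> - eps * k)" using g up unfolding good_step_def by force
          hence d: "Delta a p k j > - eps * k" using kp True by simp
          have "Delta a p (Suc k) j \<ge> Delta a p k j - 1" using st mx True by simp
          then show ?thesis using d e1 c0 by linarith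
        next
          case False
          hence "j < p k" using j up by simp
          hence ih: "Delta a p k j \<ge> - (eps * k + 1 + (2 + 2*a) * N0)" using Suc.IH by blast
          have "Delta a p (Suc k) j \<ge> Delta a p k j" using st mx False \<open>j < p k\<close> by simp
          then show ?thesis using ih e1 by linarith
        qed
      qed
    qed
  qed
qed



lemma step_prob_cong:
  assumes "\<forall>i\<le>Suc k. p i = q i"
  shows "step_prob a b p k = step_prob a b q k"
proof -
  have "Delta a p k (p k) = Delta a q k (q k)"
    using assms Delta_cong[of k p q a "p k"] by simp
  thus ?thesis unfolding step_prob_def using assms by (simp add: Let_def)
qed

definition hist :: "'w measure \<Rightarrow> (nat \<Rightarrow> 'w \<Rightarrow> int) \<Rightarrow> int list \<Rightarrow> 'w set" where
  "hist M X l = {\<omega> \<in> space M. \<forall>i<length l. X i \<omega> = l ! i}"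

definition allowed :: "real \<Rightarrow> real \<Rightarrow> int list \<Rightarrow> int set" where
  "allowed a eps l = (let n = length l - 1; d = Delta a (nth l) n (l ! n) in
     if n > 0 \<and> d \<ge> eps * n then {l ! n + 1}
     else if n > 0 \<and> d \<le> - eps * n then {l ! n - 1} else {l ! n + 1, l ! n - 1})"

definition bad :: "'w measure \<Rightarrow> (nat \<Rightarrow> 'w \<Rightarrow> int) \<Rightarrow> real \<Rightarrow> real \<Rightarrow> int list \<Rightarrow> 'w set" where
  "bad M X a eps l = hist M X l \<inter> {\<omega> \<in> space M. X (length l) \<omega> \<notin> allowed a eps l}"

definition Aset :: "'w measure \<Rightarrow> (nat \<Rightarrow> 'w \<Rightarrow> int) \<Rightarrow> real \<Rightarrow> real \<Rightarrow> nat \<Rightarrow> 'w set" where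
  "Aset M X a eps n = (\<Union>l\<in>{l. length l = Suc n}. bad M X a eps l)"

lemma path_prob_snoc:
  assumes "length l = Suc n"
  shows "path_prob a b (nth (l @ [v])) (Suc n) = path_prob a b (nth l) n * step_prob a b (nth (l @ [v])) n"
proof -
  have p0: "(l @ [v]) ! 0 = l ! 0" using assms by (simp add: nth_append)
  have "(\<Prod>k<n. step_prob a b (nth (l @ [v])) k) = (\<Prod>k<n. step_prob a b (nth l) k)"
  proof (rule prod.cong)
    fix k assume "k \<in> {..<n}"
    hence "\<forall>i\<le>Suc k. (l @ [v]) ! i = l ! i" using assms by (auto simp: nth_append)
    thus "step_prob a b (nth (l @ [v])) k = step_prob a b (nth l) k" by (rule step_prob_cong)
  qed simp
  thus ?thesis unfolding path_prob_def using p0 by simp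
qed

lemma Delta_snoc:
  assumes "length l = Suc n"
  shows "Delta a (nth (l @ [v])) n j = Delta a (nth l) n j"
  using assms by (intro Delta_cong) (auto simp: nth_append)

lemma step_prob_snoc:
  fixes a b :: real and l :: "int list"
  assumes "length l = Suc n"
  defines "d \<equiv> Delta a (nth l) n (l ! n)"
  shows "step_prob a b (nth (l @ [l ! n + 1])) n = exp (b * d) / (exp (b * d) + exp (- b * d))"
    and "step_prob a b (nth (l @ [l ! n - 1])) n = exp (- b * d) / (exp (b * d) + exp (- b * d))"
proof -
  have n: "n < length l" using assms by simp
  show "step_prob a b (nth (l @ [l ! n + 1])) n = exp (b * d) / (exp (b * d) + exp (- b * d))"
    unfolding step_prob_def d_def using n Delta_snoc[OF assms(1), of a "l ! n + 1" "l ! n"]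
    by (simp add: nth_append assms(1) Let_def)
  show "step_prob a b (nth (l @ [l ! n - 1])) n = exp (- b * d) / (exp (b * d) + exp (- b * d))"
    unfolding step_prob_def d_def using n Delta_snoc[OF assms(1), of a "l ! n - 1" "l ! n"]
    by (simp add: nth_append assms(1) Let_def)
qed

context
  fixes M :: "'w measure" and X :: "nat \<Rightarrow> 'w \<Rightarrow> int" and a b eps :: real
  assumes W: "is_walk M a b X"
begin

interpretation prob_space M using W unfolding is_walk_def by simp

lemma X_meas[measurable]: "X i \<in> measurable M (count_space UNIV)"
  using W unfolding is_walk_def by simp

lemma hist_sets[measurable]: "hist M X l \<in> sets M"
  unfolding hist_def by measurable

lemma bad_sets[measurable]: "bad M X a eps l \<in> sets M"
  unfolding bad_def by measurable

lemma hist_measure: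
  assumes "length l = Suc n"
  shows "measure M (hist M X l) = path_prob a b (nth l) n"
proof -
  have "hist M X l = {\<omega> \<in> space M. \<forall>i\<le>n. X i \<omega> = l ! i}"
    unfolding hist_def using assms by (auto simp: less_Suc_eq_le)
  thus ?thesis using W unfolding is_walk_def by simp
qed

lemma hist_spaceD: "x \<in> hist M X l \<Longrightarrow> x \<in> space M"
  unfolding hist_def by simp

lemma hist_snoc: "hist M X (l @ [v]) = hist M X l \<inter> {\<omega> \<in> space M. X (length l) \<omega> = v}"
  unfolding hist_def by (auto simp: nth_append less_Suc_eq)

lemma bad_measure:
  assumes len: "length l = Suc n" and bpos: "b > 0" and eps: "eps > 0"
  shows "measure M (bad M X a eps l) \<le> exp (- (2*b*eps*real n)) * measure M (hist M X l)"
proof -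
  define d where "d = Delta a (nth l) n (l ! n)"
  define Z where "Z = exp (b*d) + exp (-b*d)"
  have Zp: "Z > 0" unfolding Z_def by (simp add: add_pos_pos)
  define P where "P = measure M (hist M X l)"
  have P0: "P \<ge> 0" unfolding P_def by simp
  have lv: "length (l @ [v]) = Suc (Suc n)" for v using len by simp
  have mp: "measure M (hist M X (l @ [l!n+1])) = P * (exp (b*d) / Z)"
    unfolding P_def Z_def d_def
    using hist_measure[OF lv] path_prob_snoc[OF len] hist_measure[OF len] step_prob_snoc(1)[OF len]
    by simp
  have mm: "measure M (hist M X (l @ [l!n-1])) = P * (exp (-b*d) / Z)"
    unfolding P_def Z_def d_def
    using hist_measure[OF lv] path_prob_snoc[OF len] hist_measure[OF len] step_prob_snoc(2)[OF len]
    by simp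
  have H: "\<And>v. hist M X (l @ [v]) = hist M X l \<inter> {\<omega> \<in> space M. X (Suc n) \<omega> = v}"
    using hist_snoc len by simp
  have al: "allowed a eps l = (if n > 0 \<and> d \<ge> eps * n then {l ! n + 1}
     else if n > 0 \<and> d \<le> - eps * n then {l ! n - 1} else {l ! n + 1, l ! n - 1})"
    unfolding allowed_def d_def len by (simp add: Let_def)
  have bd: "bad M X a eps l = hist M X l \<inter> {\<omega> \<in> space M. X (Suc n) \<omega> \<notin> allowed a eps l}"
    unfolding bad_def len by simp
  have eb: "exp (-(2*b*eps*real n)) * P \<ge> 0" using P0 by simp
  show ?thesis
  proof (cases "n > 0 \<and> d \<ge> eps * n")
    case True
    have "bad M X a eps l = hist M X l - hist M X (l @ [l!n+1])"
      unfolding bd al H using True by (auto dest: hist_spaceD)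
    hence "measure M (bad M X a eps l) = P - P * (exp (b*d) / Z)"
      using finite_measure_Diff[of "hist M X l" "hist M X (l @ [l!n+1])"] mp
      unfolding P_def H by auto
    also have "\<dots> = P * (exp (-b*d) / Z)" using Zp unfolding Z_def by (simp add: field_simps)
    also have "\<dots> \<le> P * exp (-(2*b*eps*real n))"
    proof (rule mult_left_mono[OF _ P0])
      have "exp (-b*d) / Z \<le> exp (-b*d) / exp (b*d)"
        by (rule divide_left_mono) (auto simp: Z_def intro!: mult_pos_pos add_pos_pos)
      also have "\<dots> = exp (-(2*b*d))" by (simp add: exp_diff[symmetric])
      also have "\<dots> \<le> exp (-(2*b*eps*real n))"
        using True bpos by (simp add: mult_left_mono)
      finally show "exp (-b*d) / Z \<le> exp (-(2*b*eps*real n))" .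
    qed
    finally show ?thesis unfolding P_def by (simp add: mult.commute)
  next
    case NR: False
    show ?thesis
    proof (cases "n > 0 \<and> d \<le> - eps * n")
      case True
      have "bad M X a eps l = hist M X l - hist M X (l @ [l!n-1])"
        unfolding bd al H using True NR by (auto dest: hist_spaceD)
      hence "measure M (bad M X a eps l) = P - P * (exp (-b*d) / Z)"
        using finite_measure_Diff[of "hist M X l" "hist M X (l @ [l!n-1])"] mm
        unfolding P_def H by auto
      also have "\<dots> = P * (exp (b*d) / Z)" using Zp unfolding Z_def by (simp add: field_simps)
      also have "\<dots> \<le> P * exp (-(2*b*eps*real n))"
      proof (rule mult_left_mono[OF _ P0])
        have "exp (b*d) / Z \<le> exp (b*d) / exp (-b*d)"
          by (rule divide_left_mono) (auto simp: Z_def intro!: mult_pos_pos add_pos_pos)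
        also have "\<dots> = exp (2*b*d)" by (simp add: exp_diff[symmetric])
        also have "\<dots> \<le> exp (-(2*b*eps*real n))"
        proof -
          have "b * d \<le> b * (- eps * n)" using True bpos by (intro mult_left_mono) auto
          thus ?thesis by simp
        qed
        finally show "exp (b*d) / Z \<le> exp (-(2*b*eps*real n))" .
      qed
      finally show ?thesis unfolding P_def by (simp add: mult.commute)
    next
      case NL: False
      have ne: "l!n+1 \<noteq> l!n-1" by simp
      have "bad M X a eps l = (hist M X l - hist M X (l @ [l!n+1])) - hist M X (l @ [l!n-1])"
        unfolding bd al H using NR NL by (auto dest: hist_spaceD)
      moreover have "measure M ((hist M X l - hist M X (l @ [l!n+1])) - hist M X (l @ [l!n-1]))
          = measure M (hist M X l - hist M X (l @ [l!n+1])) - measure M (hist M X (l @ [l!n-1]))"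
        by (rule finite_measure_Diff) (auto simp: H)
      moreover have "measure M (hist M X l - hist M X (l @ [l!n+1])) = P - P * (exp (b*d) / Z)"
        using finite_measure_Diff[of "hist M X l" "hist M X (l @ [l!n+1])"] mp
        unfolding P_def H by auto
      moreover have "P - P * (exp (b*d) / Z) - P * (exp (-b*d) / Z) = 0"
        using Zp unfolding Z_def by (simp add: field_simps)
      ultimately have "measure M (bad M X a eps l) = 0" using mm by simp
      thus ?thesis using eb unfolding P_def by simp
    qed
  qed
qed

lemma Aset_sets[measurable]: "Aset M X a eps n \<in> sets M"
  unfolding Aset_def by (intro sets.countable_UN) auto

lemma Aset_measure:
  assumes bpos: "b > 0" and eps: "eps > 0"
  shows "measure M (Aset M X a eps n) \<le> exp (-(2*b*eps*real n))"
proof -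
  let ?L = "{l::int list. length l = Suc n}"
  let ?e = "exp (-(2*b*eps*real n))"
  have cL: "countable ?L" by (rule countableI_type)
  have disj: "disjoint_family_on (hist M X) ?L"
    unfolding disjoint_family_on_def
  proof (intro ballI impI)
    fix l m assume l: "l \<in> ?L" and m: "m \<in> ?L" and lm: "l \<noteq> m"
    show "hist M X l \<inter> hist M X m = {}"
    proof (rule ccontr)
      assume "hist M X l \<inter> hist M X m \<noteq> {}"
      then obtain w where "w \<in> hist M X l" "w \<in> hist M X m" by blast
      hence "\<forall>i<Suc n. l ! i = m ! i" using l m unfolding hist_def by auto
      hence "l = m" using l m by (intro nth_equalityI) auto
      thus False using lm by simp
    qed
  qed
  have disjb: "disjoint_family_on (bad M X a eps) ?L"
    using disj unfolding disjoint_family_on_def bad_def by blast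
  have "emeasure M (Aset M X a eps n) = (\<integral>\<^sup>+l. emeasure M (bad M X a eps l) \<partial>count_space ?L)"
    unfolding Aset_def by (rule emeasure_UN_countable) (auto simp: cL disjb)
  also have "\<dots> \<le> (\<integral>\<^sup>+l. ennreal ?e * emeasure M (hist M X l) \<partial>count_space ?L)"
  proof (rule nn_integral_mono)
    fix l assume "l \<in> space (count_space ?L)"
    hence len: "length l = Suc n" by simp
    have "emeasure M (bad M X a eps l) = ennreal (measure M (bad M X a eps l))"
      by (simp add: emeasure_eq_measure)
    also have "\<dots> \<le> ennreal (?e * measure M (hist M X l))"
      using bad_measure[OF len bpos eps] by (simp add: ennreal_leI)
    also have "\<dots> = ennreal ?e * emeasure M (hist M X l)"
      by (simp add: emeasure_eq_measure ennreal_mult)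
    finally show "emeasure M (bad M X a eps l) \<le> ennreal ?e * emeasure M (hist M X l)" .
  qed
  also have "\<dots> = ennreal ?e * (\<integral>\<^sup>+l. emeasure M (hist M X l) \<partial>count_space ?L)"
    by (rule nn_integral_cmult) simp
  also have "(\<integral>\<^sup>+l. emeasure M (hist M X l) \<partial>count_space ?L) = emeasure M (\<Union>(hist M X ` ?L))"
    by (rule emeasure_UN_countable[symmetric]) (auto simp: cL disj)
  also have "ennreal ?e * emeasure M (\<Union>(hist M X ` ?L)) \<le> ennreal ?e * 1"
    by (intro mult_left_mono) (simp_all add: emeasure_eq_measure)
  finally have "emeasure M (Aset M X a eps n) \<le> ennreal ?e"
    by simp
  thus ?thesis by (simp add: emeasure_eq_measure ennreal_le_iff)
qed

lemma good_of_notin: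
  assumes w: "w \<in> space M" and nA: "w \<notin> Aset M X a eps n" and eps: "eps > 0"
  shows "good_step a eps (\<lambda>i. X i w) n"
proof -
  define l where "l = map (\<lambda>i. X i w) [0..<Suc n]"
  have len: "length l = Suc n" unfolding l_def by simp
  have li: "\<And>i. i < Suc n \<Longrightarrow> l ! i = X i w" unfolding l_def by (simp del: upt_Suc)
  have "w \<in> hist M X l" unfolding hist_def using w li len by auto
  moreover have "w \<notin> bad M X a eps l" using nA len unfolding Aset_def by auto
  ultimately have inA: "X (Suc n) w \<in> allowed a eps l" unfolding bad_def using w len by auto
  have ln: "l ! n = X n w" using li by simp
  have dd: "Delta a (nth l) n (X n w) = Delta a (\<lambda>i. X i w) n (X n w)"
    using li Delta_cong[of n "nth l" "\<lambda>i. X i w" a "X n w"] by auto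
  have enp: "n > 0 \<Longrightarrow> eps * real n > 0" using eps by simp
  show ?thesis using inA enp unfolding good_step_def allowed_def len Let_def
    by (simp only: dd ln diff_Suc_1) (auto split: if_splits)
qed

end



lemma auxu: "(x::real) \<le> y + 1 + z \<Longrightarrow> 2*(1+z) < y \<Longrightarrow> x < 3/2*y"
proof -
  assume "x \<le> y + 1 + z" "2*(1+z) < y"
  moreover have "2*(1+z) = 2 + 2*z" by simp
  ultimately show ?thesis by linarith
qed
lemma auxl: "(x::real) \<ge> - (y + 1 + z) \<Longrightarrow> 2*(1+z) < y \<Longrightarrow> x > - (3/2*y)"
proof -
  assume "x \<ge> - (y + 1 + z)" "2*(1+z) < y"
  moreover have "2*(1+z) = 2 + 2*z" by simp
  ultimately show ?thesis by linarith
qed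

lemma final_det:
  fixes p :: "nat \<Rightarrow> int"
  assumes a: "a > 0" and eps: "eps > 0" and good: "\<forall>n\<ge>N. good_step a eps p n"
  shows "(\<exists>N1::nat. \<forall>k\<ge>N1. \<forall>j::int. p k = j \<longrightarrow>
        (Delta a p k j / real k \<ge> eps \<longrightarrow> p (Suc k) = j + 1) \<and>
        (Delta a p k j / real k \<le> - eps \<longrightarrow> p (Suc k) = j - 1)) \<and>
    (\<exists>N2::nat. \<forall>k\<ge>N2. \<forall>j::int.
        (p k < j \<longrightarrow> Delta a p k j / real k < 3 * eps / 2) \<and>
        (p k > j \<longrightarrow> Delta a p k j / real k > - (3 * eps / 2)))"
proof
  define N0 where "N0 = max N 1"
  have N0p: "N0 > 0" unfolding N0_def by simp
  have good': "\<forall>n\<ge>N0. good_step a eps p n" using good unfolding N0_def by simp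
  show "\<exists>N1::nat. \<forall>k\<ge>N1. \<forall>j::int. p k = j \<longrightarrow>
        (Delta a p k j / real k \<ge> eps \<longrightarrow> p (Suc k) = j + 1) \<and>
        (Delta a p k j / real k \<le> - eps \<longrightarrow> p (Suc k) = j - 1)"
  proof (intro exI allI impI conjI)
    fix k :: nat and j assume k: "N0 \<le> k" and j: "p k = j"
    have kp: "real k > 0" using k N0p by simp
    have g: "good_step a eps p k" using good' k by simp
    {
      assume "Delta a p k j / real k \<ge> eps"
      hence "Delta a p k j \<ge> eps * k" using kp by (simp add: pos_le_divide_eq)
      thus "p (Suc k) = j + 1" using g j kp unfolding good_step_def by auto
    }
    {
      assume "Delta a p k j / real k \<le> - eps"
      hence "Delta a p k j \<le> - eps * k" using kp by (simp add: pos_divide_le_eq)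
      thus "p (Suc k) = j - 1" using g j kp unfolding good_step_def by auto
    }
  qed
  define C where "C = (2 + 2*a) * real N0"
  have db: "\<And>k. (\<forall>j. p k < j \<longrightarrow> Delta a p k j \<le> eps * k + 1 + C) \<and>
         (\<forall>j. j < p k \<longrightarrow> Delta a p k j \<ge> - (eps * k + 1 + C))"
    using det_bound[OF a eps N0p good'] unfolding C_def by blast
  define N2 where "N2 = nat \<lceil>2 * (1 + C) / eps\<rceil> + 1"
  show "\<exists>N2::nat. \<forall>k\<ge>N2. \<forall>j::int.
        (p k < j \<longrightarrow> Delta a p k j / real k < 3 * eps / 2) \<and>
        (p k > j \<longrightarrow> Delta a p k j / real k > - (3 * eps / 2))"
  proof (intro exI allI impI conjI)
    fix k :: nat and j assume k: "N2 \<le> k"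
    have "2 * (1 + C) / eps < real k"
    proof -
      have "2 * (1 + C) / eps \<le> real (nat \<lceil>2 * (1 + C) / eps\<rceil>)" by linarith
      thus ?thesis using k unfolding N2_def by linarith
    qed
    hence big: "2 * (1 + C) < eps * real k" using eps by (simp add: pos_divide_less_eq mult.commute)
    have C0: "C \<ge> 0" unfolding C_def using a by simp
    have kp: "real k > 0" using big C0 eps
      by (metis mult_eq_0_iff not_less of_nat_0_less_iff order_le_less_trans zero_less_mult_iff
          add_nonneg_nonneg zero_le_one mult_nonneg_nonneg less_eq_real_def zero_le_numeral)
    {
      assume "p k < j"
      hence h: "Delta a p k j \<le> eps * k + 1 + C" using db by blast
      have e3: "3 * eps / 2 * real k = 3/2 * (eps * real k)" by simp
      have "Delta a p k j < 3 * eps / 2 * k" by (subst e3) (rule auxu[OF h big])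
      thus "Delta a p k j / real k < 3 * eps / 2" using kp by (simp add: pos_divide_less_eq)
    }
    {
      assume "p k > j"
      hence h: "Delta a p k j \<ge> - (eps * k + 1 + C)" using db by blast
      have e3: "- (3 * eps / 2) * real k = - (3/2 * (eps * real k))" by simp
      have "Delta a p k j > - (3 * eps / 2) * k" by (subst e3) (rule auxl[OF h big])
      thus "Delta a p k j / real k > - (3 * eps / 2)" using kp by (simp add: pos_less_divide_eq)
    }
  qed
qed

theorem mainTheorem12:
  fixes M :: "'w measure" and X :: "nat \<Rightarrow> 'w \<Rightarrow> int" and \<alpha> \<beta> \<epsilon> :: real
  assumes "\<alpha> > 1/3" and "\<beta> > 0" and "\<epsilon> > 0"
    and "is_walk M \<alpha> \<beta> X"
  shows "AE \<omega> in M.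
    (\<exists>N1::nat. \<forall>k\<ge>N1. \<forall>j::int. X k \<omega> = j \<longrightarrow>
        (Delta \<alpha> (\<lambda>i. X i \<omega>) k j / real k \<ge> \<epsilon> \<longrightarrow> X (Suc k) \<omega> = j + 1) \<and>
        (Delta \<alpha> (\<lambda>i. X i \<omega>) k j / real k \<le> - \<epsilon> \<longrightarrow> X (Suc k) \<omega> = j - 1)) \<and>
    (\<exists>N2::nat. \<forall>k\<ge>N2. \<forall>j::int.
        (X k \<omega> < j \<longrightarrow> Delta \<alpha> (\<lambda>i. X i \<omega>) k j / real k < 3 * \<epsilon> / 2) \<and>
        (X k \<omega> > j \<longrightarrow> Delta \<alpha> (\<lambda>i. X i \<omega>) k j / real k > - (3 * \<epsilon> / 2)))"
proof -
  interpret prob_space M using assms(4) unfolding is_walk_def by simp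
  have apos: "\<alpha> > 0" using assms(1) by simp
  let ?A = "Aset M X \<alpha> \<epsilon>"
  have q: "exp (-(2*\<beta>*\<epsilon>)) < 1" using assms(2,3) by simp
  have sum: "summable (\<lambda>n. measure M (?A n))"
  proof (rule summable_comparison_test[of _ "\<lambda>n. exp (-(2*\<beta>*\<epsilon>)) ^ n"])
    show "\<exists>N. \<forall>n\<ge>N. norm (measure M (?A n)) \<le> exp (-(2*\<beta>*\<epsilon>)) ^ n"
    proof (intro exI allI impI)
      fix n :: nat
      have "exp (-(2*\<beta>*\<epsilon>*real n)) = exp (real n * (-(2*\<beta>*\<epsilon>)))" by (simp add: algebra_simps)
      also have "\<dots> = exp (-(2*\<beta>*\<epsilon>)) ^ n" by (rule exp_of_nat_mult)
      finally show "norm (measure M (?A n)) \<le> exp (-(2*\<beta>*\<epsilon>)) ^ n"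
        using Aset_measure[OF assms(4) assms(2) assms(3), of n] by simp
    qed
    show "summable (\<lambda>n. exp (-(2*\<beta>*\<epsilon>)) ^ n)"
      by (rule summable_geometric) (use q in simp)
  qed
  have "AE \<omega> in M. eventually (\<lambda>n. \<omega> \<in> space M - ?A n) sequentially"
    by (rule borel_cantelli_AE1) (auto simp: Aset_sets[OF assms(4)] emeasure_eq_measure sum)
  then show ?thesis using AE_space
  proof eventually_elim
    case (elim \<omega>)
    from elim(1) obtain N where N: "\<forall>n\<ge>N. \<omega> \<in> space M - ?A n"
      unfolding eventually_sequentially by blast
    have "\<forall>n\<ge>N. good_step \<alpha> \<epsilon> (\<lambda>i. X i \<omega>) n"
      using N good_of_notin[OF assms(4) elim(2) _ assms(3)] by blast
    from final_det[OF apos assms(3) this] show ?case .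
  qed
qed

end
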